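(* Any algorithm that estimates the maximum path cover size of an $n$-vertex graph within a constant multiplicative factor requires $\Omega(n^2)$ queries in the adjacency matrix model.
   Context: A path cover is a collection of vertex-disjoint simple paths; its size is the total number of edges, and the maximum path cover size is the maximum over all path covers. Estimating within a constant multiplicative factor $\gamma\in(0,1]$ means outputting $\tilde{\rho}$ with $\gamma\rho\le\tilde{\rho}\le\rho$. In the adjacency matrix model the algorithm may query, for any pair of vertices, whether they are adjacent. *)

theory Defs
  imports "HOL-Probability.Probability_Mass_Function"
begin

definition is_graph :: "nat \<Rightarrow> (nat \<Rightarrow> nat \<Rightarrow> bool) \<Rightarrow> bool" where
  "is_graph n E \<longleftrightarrow> (\<forall>u v. E u v \<longrightarrow> u < n \<and> v < n \<and> u \<noteq> v \<and> E v u)"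

definition is_path :: "nat \<Rightarrow> (nat \<Rightarrow> nat \<Rightarrow> bool) \<Rightarrow> nat list \<Rightarrow> bool" where
  "is_path n E p \<longleftrightarrow> p \<noteq> [] \<and> distinct p \<and> set p \<subseteq> {..<n} \<and>
     (\<forall>i. Suc i < length p \<longrightarrow> E (p ! i) (p ! Suc i))"

definition is_path_cover :: "nat \<Rightarrow> (nat \<Rightarrow> nat \<Rightarrow> bool) \<Rightarrow> nat list list \<Rightarrow> bool" where
  "is_path_cover n E P \<longleftrightarrow> (\<forall>p\<in>set P. is_path n E p) \<and>
     (\<forall>i j. i < length P \<longrightarrow> j < length P \<longrightarrow> i \<noteq> j \<longrightarrow> set (P ! i) \<inter> set (P ! j) = {})"

text \<open>Size of a path cover: total number of edges.\<close>
definition pc_size :: "nat list list \<Rightarrow> nat" where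
  "pc_size P = sum_list (map (\<lambda>p. length p - 1) P)"

definition max_path_cover :: "nat \<Rightarrow> (nat \<Rightarrow> nat \<Rightarrow> bool) \<Rightarrow> nat" where
  "max_path_cover n E = Max {pc_size P | P. is_path_cover n E P}"

text \<open>Deterministic query algorithms in the adjacency matrix model: decision trees.
  Query u v t f asks whether u,v are adjacent and continues with t (yes) or f (no);
  a leaf outputs a real estimate.\<close>
datatype qtree = Leaf real | Query nat nat qtree qtree

fun run :: "qtree \<Rightarrow> (nat \<Rightarrow> nat \<Rightarrow> bool) \<Rightarrow> real" where
  "run (Leaf r) E = r"
| "run (Query u v t f) E = (if E u v then run t E else run f E)"

fun nqueries :: "qtree \<Rightarrow> (nat \<Rightarrow> nat \<Rightarrow> bool) \<Rightarrow> nat" where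
  "nqueries (Leaf r) E = 0"
| "nqueries (Query u v t f) E = Suc (if E u v then nqueries t E else nqueries f E)"

text \<open>A randomized algorithm is a probability distribution over decision trees.\<close>
definition estimates_mpc :: "real \<Rightarrow> nat \<Rightarrow> qtree pmf \<Rightarrow> bool" where
  "estimates_mpc \<gamma> n A \<longleftrightarrow> (\<forall>E. is_graph n E \<longrightarrow>
     measure_pmf.prob A {t. \<gamma> * real (max_path_cover n E) \<le> run t E \<and>
                            run t E \<le> real (max_path_cover n E)} \<ge> 2/3)"

end

theory Submission
  imports Defs
begin

fun qs :: "qtree \<Rightarrow> (nat \<Rightarrow> nat \<Rightarrow> bool) \<Rightarrow> (nat \<times> nat) list" where
  "qs (Leaf r) E = []"
| "qs (Query u v t f) E = (u,v) # (if E u v then qs t E else qs f E)"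

lemma len_qs: "length (qs t E) = nqueries t E"
  by (induct t) auto

lemma run_agree: "(\<forall>(a,b)\<in>set (qs t E). E a b = E' a b) \<Longrightarrow> run t E = run t E'"
  by (induct t) auto

definition E0 :: "nat \<Rightarrow> nat \<Rightarrow> bool" where "E0 = (\<lambda>_ _. False)"
definition Ee :: "nat \<Rightarrow> nat \<Rightarrow> nat \<Rightarrow> nat \<Rightarrow> bool" where
  "Ee u v = (\<lambda>x y. (x = u \<and> y = v) \<or> (x = v \<and> y = u))"

lemma graph_E0: "is_graph n E0" by (simp add: is_graph_def E0_def)
lemma graph_Ee: "u < v \<Longrightarrow> v < n \<Longrightarrow> is_graph n (Ee u v)"
  by (auto simp: is_graph_def Ee_def)

lemma path_E0: "is_path n E0 p \<Longrightarrow> length p \<le> 1"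
  unfolding is_path_def E0_def
  by (metis One_nat_def Suc_lessI length_greater_0_conv not_less)

lemma mpc_E0: "max_path_cover n E0 = 0"
proof -
  have "{pc_size P | P. is_path_cover n E0 P} = {0}"
  proof -
    have "pc_size P = 0" if "is_path_cover n E0 P" for P
    proof -
      have "\<forall>p\<in>set P. length p - 1 = 0"
        using that path_E0 unfolding is_path_cover_def by fastforce
      then show ?thesis unfolding pc_size_def by (simp add: sum_list_eq_0_iff)
    qed
    moreover have "is_path_cover n E0 []" by (simp add: is_path_cover_def)
    moreover have "pc_size [] = 0" by (simp add: pc_size_def)
    ultimately show ?thesis by force
  qed
  then show ?thesis by (simp add: max_path_cover_def)
qed

lemma path_Ee:
  assumes "u < v" "is_path n (Ee u v) p" "Suc 0 < length p"
  shows "length p = 2 \<and> u \<in> set p"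
proof -
  have d: "distinct p" and e: "\<And>i. Suc i < length p \<Longrightarrow> Ee u v (p ! i) (p ! Suc i)"
    using assms(2) unfolding is_path_def by auto
  have "\<not> 2 < length p"
  proof
    assume "2 < length p"
    then have "Ee u v (p!0) (p!1)" "Ee u v (p!1) (p!2)" using e[of 0] e[of 1]
      by (simp_all add: numeral_2_eq_2)
    moreover have "p!0 \<noteq> p!2" using nth_eq_iff_index_eq[OF d, of 0 2] \<open>2 < length p\<close> by (cases "p = []") auto
    ultimately show False using assms(1) by (auto simp: Ee_def)
  qed
  then have l: "length p = 2" using assms(3) by linarith
  have "Ee u v (p!0) (p!1)" using e l by simp
  then have "u = p!0 \<or> u = p!1" by (auto simp: Ee_def)
  then show ?thesis using l by (metis nth_mem one_less_numeral_iff pos2 semiring_norm(76))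
qed

lemma pc_Ee: assumes "u < v" "is_path_cover n (Ee u v) P" shows "pc_size P \<le> 1"
proof -
  have pp: "\<And>i. i < length P \<Longrightarrow> is_path n (Ee u v) (P!i)"
    using assms(2) unfolding is_path_cover_def by auto
  have dj: "\<And>i j. i < length P \<Longrightarrow> j < length P \<Longrightarrow> i \<noteq> j \<Longrightarrow> set (P ! i) \<inter> set (P ! j) = {}"
    using assms(2) unfolding is_path_cover_def by auto
  have "pc_size P = (\<Sum>i<length P. length (P!i) - 1)"
    unfolding pc_size_def by (simp add: sum_list_sum_nth atLeast0LessThan)
  also have "\<dots> \<le> (\<Sum>i<length P. (if u \<in> set (P!i) then 1 else 0))"
  proof (rule sum_mono)
    fix i assume "i \<in> {..<length P}"
    then have "is_path n (Ee u v) (P!i)" using pp by auto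
    then show "length (P!i) - 1 \<le> (if u \<in> set (P!i) then 1 else 0)"
    proof (cases "Suc 0 < length (P!i)")
      case True
      then show ?thesis using path_Ee[OF assms(1) \<open>is_path n (Ee u v) (P!i)\<close>] by simp
    qed simp
  qed
  also have "\<dots> = card {i\<in>{..<length P}. u \<in> set (P!i)}"
    by (simp add: sum.If_cases Int_def)
  also have "\<dots> \<le> Suc 0"
  proof (subst card_le_Suc0_iff_eq)
    show "finite {i\<in>{..<length P}. u \<in> set (P!i)}" by simp
    show "\<forall>a1\<in>{i\<in>{..<length P}. u \<in> set (P!i)}. \<forall>a2\<in>{i\<in>{..<length P}. u \<in> set (P!i)}. a1 = a2"
      using dj by blast
  qed
  finally show ?thesis by simp
qed

lemma mpc_Ee: assumes "u < v" "v < n" shows "1 \<le> max_path_cover n (Ee u v)"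
proof -
  let ?S = "{pc_size P | P. is_path_cover n (Ee u v) P}"
  have "?S \<subseteq> {..1}" using pc_Ee[OF assms(1)] by auto
  then have f: "finite ?S" using finite_subset by blast
  have "is_path_cover n (Ee u v) [[u,v]]"
    using assms by (auto simp: is_path_cover_def is_path_def Ee_def)
  moreover have "pc_size [[u,v]] = 1" by (simp add: pc_size_def)
  ultimately have "1 \<in> ?S" by force
  then show ?thesis unfolding max_path_cover_def using f Max_ge by blast
qed

lemma Ee_sym: "Ee u v = Ee v u" by (auto simp: Ee_def fun_eq_iff)

lemma mpc_Ee': assumes "u \<noteq> v" "u < n" "v < n" shows "1 \<le> max_path_cover n (Ee u v)"
  using assms mpc_Ee Ee_sym by (metis linorder_neqE_nat)

lemma graph_Ee': "u \<noteq> v \<Longrightarrow> u < n \<Longrightarrow> v < n \<Longrightarrow> is_graph n (Ee u v)"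
  by (auto simp: is_graph_def Ee_def)

lemma prob_inter:
  fixes A :: "'a pmf"
  shows "measure_pmf.prob A X + measure_pmf.prob A Y - 1 \<le> measure_pmf.prob A (X \<inter> Y)"
proof -
  have "measure_pmf.prob A (X \<union> Y) = measure_pmf.prob A X + measure_pmf.prob A (Y - X)"
    by (simp add: measure_pmf.finite_measure_Union')
  moreover have "measure_pmf.prob A (Y - X) = measure_pmf.prob A Y - measure_pmf.prob A (Y \<inter> X)"
    by (simp add: measure_pmf.finite_measure_Diff')
  moreover have "measure_pmf.prob A (X \<union> Y) \<le> 1" by simp
  ultimately show ?thesis by (simp add: Int_commute)
qed

lemma card_pairs: "card {(u,v). u < n \<and> v < n \<and> u \<noteq> v} = n * n - n"
proof -
  have "{(u,v). u < n \<and> v < n \<and> u \<noteq> v} = Sigma {..<n} (\<lambda>u. {..<n} - {u})" by auto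
  then have "card {(u,v). u < n \<and> v < n \<and> u \<noteq> v} = (\<Sum>u<n. card ({..<n} - {u}))"
    by (simp add: card_SigmaI)
  also have "\<dots> = (\<Sum>u<n. n - 1)" by (intro sum.cong) auto
  also have "\<dots> = n * n - n" by (simp add: diff_mult_distrib2)
  finally show ?thesis .
qed

lemma card_queried:
  "card {(u,v). u < n \<and> v < n \<and> u \<noteq> v \<and> ((u,v) \<in> set (qs t E) \<or> (v,u) \<in> set (qs t E))}
     \<le> 2 * nqueries t E"
proof -
  have "{(u,v). u < n \<and> v < n \<and> u \<noteq> v \<and> ((u,v) \<in> set (qs t E) \<or> (v,u) \<in> set (qs t E))}
     \<subseteq> set (qs t E) \<union> prod.swap ` set (qs t E)" by force
  then have "card {(u,v). u < n \<and> v < n \<and> u \<noteq> v \<and> ((u,v) \<in> set (qs t E) \<or> (v,u) \<in> set (qs t E))}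
     \<le> card (set (qs t E) \<union> prod.swap ` set (qs t E))" by (intro card_mono) auto
  also have "\<dots> \<le> card (set (qs t E)) + card (prod.swap ` set (qs t E))" by (rule card_Un_le)
  also have "\<dots> \<le> length (qs t E) + length (qs t E)"
    by (intro add_mono card_length order.trans[OF card_image_le card_length]) auto
  finally show ?thesis by (simp add: len_qs)
qed

theorem lemma11p7:
  fixes \<gamma> :: real
  assumes "0 < \<gamma>" and "\<gamma> \<le> 1"
  shows "\<exists>c > 0. \<exists>N. \<forall>n \<ge> N. \<forall>A :: qtree pmf. estimates_mpc \<gamma> n A \<longrightarrow>
           (\<exists>E. is_graph n E \<and> (\<exists>t \<in> set_pmf A. real (nqueries t E) \<ge> c * real n ^ 2))"
proof (intro exI[of _ "1/13"] conjI exI[of _ 2] allI impI)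
  show "(0::real) < 1/13" by simp
  fix n :: nat and A :: "qtree pmf"
  assume n2: "2 \<le> n" and est: "estimates_mpc \<gamma> n A"
  show "\<exists>E. is_graph n E \<and> (\<exists>t \<in> set_pmf A. real (nqueries t E) \<ge> 1/13 * real n ^ 2)"
  proof (rule ccontr)
    assume "\<not> ?thesis"
    then have small: "\<And>t. t \<in> set_pmf A \<Longrightarrow> real (nqueries t E0) < 1/13 * real n ^ 2"
      using graph_E0 by force
    define P where "P = {(u,v). u < n \<and> v < n \<and> u \<noteq> v}"
    define Q where "Q = (\<lambda>(u,v). {t. (u,v) \<in> set (qs t E0) \<or> (v,u) \<in> set (qs t E0)})"
    define G0 where "G0 = {t. \<gamma> * real (max_path_cover n E0) \<le> run t E0 \<and>
                            run t E0 \<le> real (max_path_cover n E0)}"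
    define G where "G = (\<lambda>(u,v). {t. \<gamma> * real (max_path_cover n (Ee u v)) \<le> run t (Ee u v) \<and>
                            run t (Ee u v) \<le> real (max_path_cover n (Ee u v))})"
    have fP: "finite P" unfolding P_def
      by (rule finite_subset[of _ "{..<n} \<times> {..<n}"]) auto
    have pG0: "measure_pmf.prob A G0 \<ge> 2/3"
      using est graph_E0 unfolding estimates_mpc_def G0_def by blast
    have lb: "measure_pmf.prob A (Q e) \<ge> 1/3" if "e \<in> P" for e
    proof -
      obtain u v where e: "e = (u,v)" by (cases e)
      have uv: "u \<noteq> v" "u < n" "v < n" using that e P_def by auto
      have pG: "measure_pmf.prob A (G e) \<ge> 2/3"
        using est graph_Ee'[OF uv] unfolding estimates_mpc_def G_def e by auto
      have sub: "G0 \<inter> G e \<subseteq> Q e"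
      proof
        fix t assume t: "t \<in> G0 \<inter> G e"
        show "t \<in> Q e"
        proof (rule ccontr)
          assume "t \<notin> Q e"
          then have "\<forall>(a,b)\<in>set (qs t E0). E0 a b = Ee u v a b"
            by (auto simp: Q_def e E0_def Ee_def)
          then have r: "run t E0 = run t (Ee u v)" by (rule run_agree)
          have "run t E0 \<le> 0" using t mpc_E0 by (simp add: G0_def)
          moreover have "\<gamma> * real (max_path_cover n (Ee u v)) \<le> run t (Ee u v)"
            using t by (simp add: G_def e)
          moreover have "\<gamma> \<le> \<gamma> * real (max_path_cover n (Ee u v))"
            using mpc_Ee'[OF uv] assms(1) by simp
          ultimately show False using r assms(1) by linarith
        qed
      qed
      have "1/3 \<le> measure_pmf.prob A (G0 \<inter> G e)" using prob_inter[of A G0 "G e"] pG0 pG by linarith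
      also have "\<dots> \<le> measure_pmf.prob A (Q e)" using sub by (rule measure_pmf.finite_measure_mono) simp
      finally show ?thesis .
    qed
    have int: "\<And>e. integrable (measure_pmf A) (indicator (Q e) :: qtree \<Rightarrow> real)"
      by (rule measure_pmf.integrable_const_bound[where B=1]) auto
    have "real (card P) / 3 \<le> (\<Sum>e\<in>P. measure_pmf.prob A (Q e))"
      using sum_mono[OF lb] by simp
    also have "\<dots> = (\<Sum>e\<in>P. measure_pmf.expectation A (indicator (Q e)))"
      by simp
    also have "\<dots> = measure_pmf.expectation A (\<lambda>t. \<Sum>e\<in>P. indicator (Q e) t)"
      by (rule Bochner_Integration.integral_sum[symmetric]) (rule int)
    also have "\<dots> \<le> measure_pmf.expectation A (\<lambda>t. 2/13 * real n ^ 2)"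
    proof (rule integral_mono_AE)
      show "integrable (measure_pmf A) (\<lambda>t. \<Sum>e\<in>P. indicator (Q e) t :: real)"
        by (intro Bochner_Integration.integrable_sum int)
      show "integrable (measure_pmf A) (\<lambda>t. 2/13 * real n ^ 2)" by simp
      show "AE t in measure_pmf A. (\<Sum>e\<in>P. indicator (Q e) t) \<le> 2/13 * real n ^ 2"
        unfolding AE_measure_pmf_iff
      proof
        fix t assume t: "t \<in> set_pmf A"
        have "(\<Sum>e\<in>P. indicator (Q e) t :: real) = (\<Sum>e\<in>P. indicator {e. t \<in> Q e} e)"
          by (intro sum.cong) (auto simp: indicator_def)
        also have "\<dots> = (\<Sum>e\<in>P \<inter> {e. t \<in> Q e}. 1)"
          using Indicator_Function.sum_mult_indicator[OF fP, where f="\<lambda>_. 1::real" and B="{e. t \<in> Q e}"]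
          by (simp only: mult_1)
        also have "\<dots> = real (card (P \<inter> {e. t \<in> Q e}))" by simp
        also have "P \<inter> {e. t \<in> Q e} = {(u,v). u < n \<and> v < n \<and> u \<noteq> v \<and>
             ((u,v) \<in> set (qs t E0) \<or> (v,u) \<in> set (qs t E0))}"
          by (auto simp: P_def Q_def)
        also have "real (card \<dots>) \<le> real (2 * nqueries t E0)"
          by (rule of_nat_mono[OF card_queried])
        also have "\<dots> \<le> 2/13 * real n ^ 2" using small[OF t] by linarith
        finally show "(\<Sum>e\<in>P. indicator (Q e) t) \<le> 2/13 * real n ^ 2" .
      qed
    qed
    also have "\<dots> = 2/13 * real n ^ 2" by simp
    finally have ineq: "real (card P) / 3 \<le> 2/13 * real n ^ 2" .
    have "card P = n * n - n" unfolding P_def by (rule card_pairs)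
    then have "real (card P) = real n * real n - real n"
      by (simp add: of_nat_diff)
    have nn: "2 * real n \<le> real n * real n" using n2 by (intro mult_right_mono) auto
    have "real n ^ 2 = real n * real n" by (simp add: power2_eq_square)
    with ineq nn n2 \<open>real (card P) = real n * real n - real n\<close> show False by linarith
  qed
qed

end
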